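(* Let $n\in\mathbb N_0$, $j\in\mathbb Z$, $s\in\mathbb N_0$ and $1\le\ell\le a^d_n$. Then for all $x\in\mathbb B^d$ and $\xi\in\mathbb S^{d-1}$, $$\Delta^sY^{n,j}_\ell(x)=Y^{n,j-s}_\ell(x)\qquad\text{and}\qquad\Delta^sY^{n,j}_\ell(\xi)=\delta_{s,j}Y^n_\ell(\xi).$$
   Context: $\mathbb B^d$ unit ball, $\mathbb S^{d-1}$ unit sphere in $\mathbb R^d$; $(a)_0=1$, $(a)_m=a(a+1)\cdots(a+m-1)$. $\mathcal H^d_n$: homogeneous harmonic polynomials of degree $n$, $a^d_n=\dim\mathcal H^d_n$, $\{Y^n_\ell\}_{\ell=1}^{a^d_n}$ an orthonormal basis of $\mathcal H^d_n$ with respect to the normalized surface measure on $\mathbb S^{d-1}$. For $n,j\in\mathbb N_0$ let $(c^{n,j}_i)_{0\le i\le j}$ be the unique solution of the linear system $$4^k\sum_{i=k}^j(-i)_k(-k)_{i-k}\frac{(n+d/2)_k}{(n+d/2)_{i-k}}c_i=\delta_{k,j},\qquad 0\le k\le j,$$ and set $Y^{n,j}_\ell(x)=\sum_{i=0}^jc^{n,j}_i(1-\|x\|^2)^iY^n_\ell(x)$; for $j<0$ set $Y^{n,j}_\ell:=0$. *)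

theory Defs
  imports "HOL-Analysis.Analysis"
begin

definition laplacian :: "('a::euclidean_space \<Rightarrow> real) \<Rightarrow> 'a \<Rightarrow> real" where
  "laplacian f x = (\<Sum>b\<in>Basis. deriv (deriv (\<lambda>t. f (x + t *\<^sub>R b))) 0)"

definition homogeneous_poly :: "nat \<Rightarrow> ('a::euclidean_space \<Rightarrow> real) \<Rightarrow> bool" where
  "homogeneous_poly n f \<longleftrightarrow>
     (\<exists>A c. finite A \<and> (\<forall>\<alpha>\<in>A. (\<Sum>b\<in>Basis. \<alpha> b) = n) \<and>
        (\<forall>x. f x = (\<Sum>\<alpha>\<in>A. c \<alpha> * (\<Prod>b\<in>Basis. (x \<bullet> b) ^ \<alpha> b))))"

definition harmonic_hom :: "nat \<Rightarrow> ('a::euclidean_space \<Rightarrow> real) set" where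
  "harmonic_hom n = {f. homogeneous_poly n f \<and> (\<forall>x. laplacian f x = 0)}"

text \<open>The coefficients c^{n,j}_i (for i \<le> j; set to 0 for i > j), as the unique solution
  of the linear system of the paper; d is the dimension.\<close>
definition coef :: "nat \<Rightarrow> nat \<Rightarrow> nat \<Rightarrow> (nat \<Rightarrow> real)" where
  "coef d n j = (THE c. (\<forall>i>j. c i = 0) \<and>
     (\<forall>k\<le>j. 4 ^ k * (\<Sum>i=k..j. pochhammer (- real i) k * pochhammer (- real k) (i - k)
            * pochhammer (real n + real d / 2) k / pochhammer (real n + real d / 2) (i - k) * c i)
          = (if k = j then 1 else 0)))"

definition Ynj :: "nat \<Rightarrow> int \<Rightarrow> ('a::euclidean_space \<Rightarrow> real) \<Rightarrow> 'a \<Rightarrow> real" where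
  "Ynj n j Y x = (if j < 0 then 0 else
     (\<Sum>i=0..nat j. coef DIM('a) n (nat j) i * (1 - (norm x)\<^sup>2) ^ i * Y x))"

end

theory Submission
  imports Defs "HOL-Computational_Algebra.Polynomial"
begin


definition Am :: "real \<Rightarrow> nat \<Rightarrow> nat \<Rightarrow> real" where
  "Am lam k i = 4 ^ k * (pochhammer (- real i) k * pochhammer (- real k) (i - k)
            * pochhammer lam k / pochhammer lam (i - k))"

lemma Am_lt: "i < k \<Longrightarrow> Am lam k i = 0"
  unfolding Am_def by (auto simp: pochhammer_eq_0_iff)

lemma Am_diag: "lam > 0 \<Longrightarrow> Am lam k k \<noteq> 0"
  unfolding Am_def by (auto simp: pochhammer_eq_0_iff dest: pochhammer_pos[of lam k])

lemma Am_0: "Am lam 0 i = (if i = 0 then 1 else 0)"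
  unfolding Am_def by (cases i) (auto simp: pochhammer_rec)

lemma Am_Suc_0: "Am lam (Suc k) 0 = 0"
  by (rule Am_lt) simp

lemma Am_Suc_1: "Am lam (Suc k) 1 = -4 * lam * Am lam k 0"
proof (cases k)
  case 0 then show ?thesis by (simp add: Am_def pochhammer_rec)
next
  case (Suc k') then show ?thesis
    by (simp add: Am_def pochhammer_rec)
qed

lemma Am_Suc_diag: "Am lam (Suc k) (Suc k) = -4 * (real k + 1) * (lam + real k) * Am lam k k"
proof -
  have a: "pochhammer (- real (Suc k)) (Suc k) = - (real k + 1) * pochhammer (- real k) k"
    by (simp add: pochhammer_rec algebra_simps)
  have b: "pochhammer lam (Suc k) = (lam + real k) * pochhammer lam k"
    by (simp add: pochhammer_rec' algebra_simps)
  show ?thesis unfolding Am_def by (simp only: a b diff_self_eq_0 power_Suc) (simp add: algebra_simps)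
qed

lemma Am_rec:
  assumes lam: "lam > 0"
  shows "Am lam (Suc k) (m+2) = 4*(real m+2)*(real m+1)*Am lam k m
           - 4*(real m+2)*(real m+1+lam)*Am lam k (m+1)"
proof -
  consider "m + 2 \<le> k" | "k = m + 1" | "k \<le> m" by linarith
  then show ?thesis
  proof cases
    case 1 then show ?thesis by (simp add: Am_lt)
  next
    case 2 then show ?thesis using Am_Suc_diag[of lam "m+1"] by (simp add: Am_lt algebra_simps)
  next
    case 3
    then obtain p where m: "m = k + p" using le_Suc_ex by blast
    define Q where "Q = pochhammer (- real (k+p+1)) k"
    define R where "R = pochhammer (- real k) p"
    define S where "S = pochhammer lam k"
    define T where "T = pochhammer lam p"
    define P where "P = pochhammer (- real (k+p)) k"
    have T: "T > 0" using lam by (simp add: T_def pochhammer_pos)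
    have lp: "lam + real p > 0" using lam by simp
    have e1: "pochhammer (- real (k + p + 2)) (Suc k) = - real (k+2+p) * Q"
      unfolding Q_def by (simp add: pochhammer_rec algebra_simps)
    have e2a: "pochhammer (- real (k+p+1)) (Suc k) = - real (k+p+1) * P"
      unfolding P_def by (simp add: pochhammer_rec algebra_simps)
    have e2b: "pochhammer (- real (k+p+1)) (Suc k) = - real (p+1) * Q"
      unfolding Q_def by (simp add: pochhammer_rec' algebra_simps)
    have e3: "pochhammer (- real (Suc k)) (Suc p) = - real (k+1) * R"
      unfolding R_def by (simp add: pochhammer_rec algebra_simps)
    have e4: "pochhammer (- real k) (Suc p) = (real p - real k) * R"
      unfolding R_def by (simp add: pochhammer_rec' algebra_simps)
    have e5: "pochhammer lam (Suc k) = (lam + real k) * S"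
      unfolding S_def by (simp add: pochhammer_rec' algebra_simps)
    have e6: "pochhammer lam (Suc p) = (lam + real p) * T"
      unfolding T_def by (simp add: pochhammer_rec' algebra_simps)
    have eP: "real (k+p+1) * P = real (p+1) * Q"
    proof -
      have "- real (k+p+1) * P = - real (p+1) * Q" using e2a e2b by simp
      then show ?thesis by (simp only: mult_minus_left)
    qed
    have L: "Am lam (Suc k) (m+2) = 4^(Suc k) * ((- real (k+2+p) * Q) * (- real (k+1) * R)
               * ((lam + real k) * S) / ((lam + real p) * T))"
    proof -
      have idx: "k + p + 2 - Suc k = Suc p" by simp
      show ?thesis unfolding Am_def m by (simp only: idx e1 e3 e5 e6)
    qed
    have R1: "Am lam k m = 4^k * (P * R * S / T)"
      unfolding Am_def m P_def R_def S_def T_def by simp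
    have R2: "Am lam k (m+1) = 4^k * (Q * ((real p - real k) * R) * S / ((lam + real p) * T))"
    proof -
      have idx: "k + p + 1 - k = Suc p" by simp
      show ?thesis unfolding Am_def m by (simp only: idx e4 e6 Q_def[symmetric] S_def[symmetric])
    qed
    have X: "4 ^ Suc k * (- real (k + 2 + p) * Q * (- real (k + 1) * R) * ((lam + real k) * S) / ((lam + real p) * T)) =
    4 * (real (k + p) + 2) * (real (k + p) + 1) * (4 ^ k * (P * R * S / T)) -
    4 * (real (k + p) + 2) * (real (k + p) + 1 + lam) * (4 ^ k * (Q * ((real p - real k) * R) * S / ((lam + real p) * T)))"
    proof -
      have eP': "(real (k+p) + 1) * P = real (p+1) * Q" using eP by (simp add: add_ac)
      have r1: "4 * (real (k + p) + 2) * (real (k + p) + 1) * (4 ^ k * (P * R * S / T))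
          = 4 * (real (k + p) + 2) * (4 ^ k * R * S / T) * ((real (k+p) + 1) * P)"
        by (simp add: field_simps)
      also have "\<dots> = 4 * (real (k + p) + 2) * (4 ^ k * R * S / T) * (real (p+1) * Q)"
        by (simp only: eP')
      finally have r1: "4 * (real (k + p) + 2) * (real (k + p) + 1) * (4 ^ k * (P * R * S / T))
          = 4 * (real (k + p) + 2) * (4 ^ k * R * S / T) * (real (p+1) * Q)" .
      show "4 ^ Suc k * (- real (k + 2 + p) * Q * (- real (k + 1) * R) * ((lam + real k) * S) / ((lam + real p) * T)) =
    4 * (real (k + p) + 2) * (real (k + p) + 1) * (4 ^ k * (P * R * S / T)) -
    4 * (real (k + p) + 2) * (real (k + p) + 1 + lam) * (4 ^ k * (Q * ((real p - real k) * R) * S / ((lam + real p) * T)))"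
      proof -
        define K where "K = 4^k*Q*R*S/T"
        define D where "D = lam + real p"
        have Dd: "lam + real p = D" by (simp add: D_def)
        have p: "4*(real k+2+real p)*(real k+1)*(lam+real k)/D =
           4*(real k+real p+2)*(real p+1) - 4*(real k+real p+2)*(real k+real p+1+lam)*(real p-real k)/D"
          using lp unfolding D_def by (simp add: field_simps)
        have l: "4 ^ Suc k * (- real (k + 2 + p) * Q * (- real (k + 1) * R) * ((lam + real k) * S) / (D * T))
           = K * (4*(real k+2+real p)*(real k+1)*(lam+real k)/D)"
          unfolding K_def by (simp add: divide_inverse inverse_mult_distrib algebra_simps)
        have r: "4 * (real (k + p) + 2) * (4 ^ k * R * S / T) * (real (p + 1) * Q) -
    4 * (real (k + p) + 2) * (real (k + p) + 1 + lam) * (4 ^ k * (Q * ((real p - real k) * R) * S / (D * T)))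
          = K * (4*(real k+real p+2)*(real p+1) - 4*(real k+real p+2)*(real k+real p+1+lam)*(real p-real k)/D)"
          unfolding K_def by (simp add: divide_inverse inverse_mult_distrib algebra_simps)
        show ?thesis by (simp only: r1 Dd l r p)
      qed
    qed
    show ?thesis unfolding L R1 R2 using X by (simp add: m)
  qed
qed




definition Lop :: "real \<Rightarrow> (nat \<Rightarrow> real) \<Rightarrow> nat \<Rightarrow> real" where
  "Lop lam c m = 4*(real m+2)*(real m+1)*c(m+2) - 4*(real m+1)*(real m+lam)*c(m+1)"

lemma sum_shift:
  fixes f :: "nat \<Rightarrow> real"
  assumes "\<forall>i>N. f i = 0"
  shows "(\<Sum>i\<le>N. f i) = f 0 + (\<Sum>m\<le>N. f (Suc m))"
proof -
  have "(\<Sum>i\<le>N. f i) = (\<Sum>i\<le>Suc N. f i)" using assms by simp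
  also have "\<dots> = f 0 + (\<Sum>m\<le>N. f (Suc m))" by (rule sum.atMost_Suc_shift)
  finally show ?thesis .
qed

lemma rec_sum:
  assumes lam: "lam > 0" and c: "\<forall>i>N. c i = 0"
  shows "(\<Sum>i\<le>N. Am lam (Suc k) i * c i) = (\<Sum>m\<le>N. Am lam k m * Lop lam c m)"
proof -
  have "(\<Sum>i\<le>N. Am lam (Suc k) i * c i) = Am lam (Suc k) 0 * c 0 + (\<Sum>m\<le>N. Am lam (Suc k) (Suc m) * c (Suc m))"
    by (rule sum_shift) (simp add: c)
  also have "(\<Sum>m\<le>N. Am lam (Suc k) (Suc m) * c (Suc m)) = Am lam (Suc k) 1 * c 1 + (\<Sum>m\<le>N. Am lam (Suc k) (Suc (Suc m)) * c (Suc (Suc m)))"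
    by (subst sum_shift) (simp_all add: c)
  finally have L: "(\<Sum>i\<le>N. Am lam (Suc k) i * c i) = -4*lam*Am lam k 0 * c 1 +
      (\<Sum>m\<le>N. (4*(real m+2)*(real m+1)*Am lam k m - 4*(real m+2)*(real m+1+lam)*Am lam k (m+1)) * c (m+2))"
    using Am_rec[OF lam, of k] by (simp add: Am_Suc_0 Am_Suc_1[unfolded One_nat_def] numeral_2_eq_2)
  have S2: "(\<Sum>m\<le>N. Am lam k m * (4*(real m+1)*(real m+lam)*c(m+1))) =
      Am lam k 0 * (4*lam*c 1) + (\<Sum>m\<le>N. Am lam k (m+1) * (4*(real m+2)*(real m+1+lam)*c(m+2)))"
    by (subst sum_shift) (simp_all add: c algebra_simps numeral_2_eq_2)
  have "(\<Sum>m\<le>N. Am lam k m * Lop lam c m) = (\<Sum>m\<le>N. Am lam k m * (4*(real m+2)*(real m+1)*c(m+2)))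
       - (\<Sum>m\<le>N. Am lam k m * (4*(real m+1)*(real m+lam)*c(m+1)))"
    unfolding Lop_def by (simp add: right_diff_distrib sum_subtractf)
  also have "\<dots> = -4*lam*Am lam k 0 * c 1 +
      (\<Sum>m\<le>N. (4*(real m+2)*(real m+1)*Am lam k m - 4*(real m+2)*(real m+1+lam)*Am lam k (m+1)) * c (m+2))"
    unfolding S2 by (simp add: algebra_simps sum_subtractf sum.distrib)
  finally show ?thesis using L by simp
qed

lemma tri_exists:
  fixes a :: "nat \<Rightarrow> nat \<Rightarrow> real"
  assumes "\<forall>k\<le>j. a k k \<noteq> 0"
  shows "\<exists>c. (\<forall>i>j. c i = 0) \<and> (\<forall>k\<le>j. (\<Sum>i=k..j. a k i * c i) = b k)"
proof -
  have "m \<le> j \<Longrightarrow> \<exists>c. (\<forall>i>j. c i = 0) \<and> (\<forall>k. j - m \<le> k \<and> k \<le> j \<longrightarrow> (\<Sum>i=k..j. a k i * c i) = b k)" for m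
  proof (induction m)
    case 0
    show ?case
      by (rule exI[of _ "\<lambda>i. if i = j then b j / a j j else 0"]) (use assms in auto)
  next
    case (Suc m)
    then obtain c where c0: "\<forall>i>j. c i = 0" and c1: "\<forall>k. j - m \<le> k \<and> k \<le> j \<longrightarrow> (\<Sum>i=k..j. a k i * c i) = b k"
      by auto
    define k0 where "k0 = j - Suc m"
    have k0: "k0 < j - m" "k0 \<le> j" using Suc.prems by (auto simp: k0_def)
    define c' where "c' = c(k0 := (b k0 - (\<Sum>i=Suc k0..j. a k0 i * c i)) / a k0 k0)"
    have nz: "a k0 k0 \<noteq> 0" using assms k0 by auto
    have "\<forall>i>j. c' i = 0" using c0 k0 by (auto simp: c'_def)
    moreover have "(\<Sum>i=k..j. a k i * c' i) = b k" if "j - Suc m \<le> k" "k \<le> j" for k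
    proof (cases "k = k0")
      case True
      have "(\<Sum>i=k0..j. a k0 i * c' i) = a k0 k0 * c' k0 + (\<Sum>i=Suc k0..j. a k0 i * c' i)"
        using k0 by (simp add: sum.atLeast_Suc_atMost)
      also have "(\<Sum>i=Suc k0..j. a k0 i * c' i) = (\<Sum>i=Suc k0..j. a k0 i * c i)"
        by (rule sum.cong) (auto simp: c'_def)
      finally show ?thesis using True nz by (simp add: c'_def)
    next
      case False
      then have "j - m \<le> k" using that k0_def by linarith
      then have "(\<Sum>i=k..j. a k i * c' i) = (\<Sum>i=k..j. a k i * c i)"
        using k0 by (intro sum.cong) (auto simp: c'_def)
      then show ?thesis using c1 \<open>j - m \<le> k\<close> that by simp
    qed
    ultimately show ?case by blast
  qed
  from this[of j] show ?thesis by auto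
qed

lemma tri_unique:
  fixes a :: "nat \<Rightarrow> nat \<Rightarrow> real"
  assumes "\<forall>k\<le>j. a k k \<noteq> 0"
    and e0: "\<forall>i>j. e i = 0" and e1: "\<forall>k\<le>j. (\<Sum>i=k..j. a k i * e i) = 0"
  shows "e i = 0"
proof (induction "j - i" arbitrary: i rule: less_induct)
  case less
  show ?case
  proof (cases "i \<le> j")
    case False then show ?thesis using e0 by auto
  next
    case True
    have "(\<Sum>i'=Suc i..j. a i i' * e i') = 0"
      by (rule sum.neutral) (use less True in \<open>auto simp: e0\<close>)
    moreover have "(\<Sum>i'=i..j. a i i' * e i') = a i i * e i + (\<Sum>i'=Suc i..j. a i i' * e i')"
      using True by (simp add: sum.atLeast_Suc_atMost)
    ultimately show ?thesis using e1 True assms(1) by auto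
  qed
qed

definition sysA :: "real \<Rightarrow> nat \<Rightarrow> (nat \<Rightarrow> real) \<Rightarrow> bool" where
  "sysA lam j c \<longleftrightarrow> (\<forall>i>j. c i = 0) \<and> (\<forall>k\<le>j. (\<Sum>i\<le>j. Am lam k i * c i) = (if k = j then 1 else 0))"

lemma sum_Am_ivl: "k \<le> j \<Longrightarrow> (\<Sum>i\<le>j. Am lam k i * c i) = (\<Sum>i=k..j. Am lam k i * c i)"
  by (rule sum.mono_neutral_right) (auto simp: Am_lt)

lemma sysA_ex1:
  assumes "lam > 0"
  shows "\<exists>!c. sysA lam j c"
proof -
  have diag: "\<forall>k\<le>j. Am lam k k \<noteq> 0" using Am_diag[OF assms] by auto
  obtain c where c: "\<forall>i>j. c i = 0" "\<forall>k\<le>j. (\<Sum>i=k..j. Am lam k i * c i) = (if k = j then 1 else 0)"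
    using tri_exists[where a="Am lam" and b="\<lambda>k. if k = j then 1 else 0", OF diag] by blast
  have "sysA lam j c" using c by (simp add: sysA_def sum_Am_ivl)
  moreover have "c' = c" if "sysA lam j c'" for c'
  proof
    fix i
    have "(\<lambda>i. c' i - c i) i = 0"
    proof (rule tri_unique[where a="Am lam", OF diag])
      show "\<forall>i>j. c' i - c i = 0" using that c by (auto simp: sysA_def)
      show "\<forall>k\<le>j. (\<Sum>i=k..j. Am lam k i * (c' i - c i)) = 0"
        using that c by (auto simp: sysA_def sum_Am_ivl right_diff_distrib sum_subtractf)
    qed
    then show "c' i = c i" by simp
  qed
  ultimately show ?thesis by blast
qed

lemma coef_sysA:
  assumes "d > 0"
  shows "sysA (real n + real d / 2) j (coef d n j)"
proof -
  let ?lam = "real n + real d / 2"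
  have lam: "?lam > 0" using assms by simp
  have eq: "(\<lambda>c. (\<forall>i>j. c i = 0) \<and>
     (\<forall>k\<le>j. 4 ^ k * (\<Sum>i=k..j. pochhammer (- real i) k * pochhammer (- real k) (i - k)
            * pochhammer (real n + real d / 2) k / pochhammer (real n + real d / 2) (i - k) * c i)
          = (if k = j then 1 else 0))) = sysA ?lam j"
  proof (rule ext)
    fix c
    have "4 ^ k * (\<Sum>i=k..j. pochhammer (- real i) k * pochhammer (- real k) (i - k)
            * pochhammer (real n + real d / 2) k / pochhammer (real n + real d / 2) (i - k) * c i)
          = (\<Sum>i\<le>j. Am ?lam k i * c i)" if "k \<le> j" for k
      unfolding sum_Am_ivl[OF that] unfolding Am_def by (simp add: sum_distrib_left mult.assoc)
    then show "((\<forall>i>j. c i = 0) \<and>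
     (\<forall>k\<le>j. 4 ^ k * (\<Sum>i=k..j. pochhammer (- real i) k * pochhammer (- real k) (i - k)
            * pochhammer (real n + real d / 2) k / pochhammer (real n + real d / 2) (i - k) * c i)
          = (if k = j then 1 else 0))) = sysA ?lam j c"
      by (simp add: sysA_def)
  qed
  show ?thesis unfolding coef_def eq by (rule theI'[OF sysA_ex1[OF lam]])
qed

lemma Lop_sysA:
  assumes lam: "lam > 0" and c: "sysA lam (Suc j) c"
  shows "sysA lam j (Lop lam c)"
proof -
  have c0: "\<forall>i>Suc j. c i = 0" using c by (simp add: sysA_def)
  have L0: "\<forall>i>j. Lop lam c i = 0" using c0 by (simp add: Lop_def)
  have "(\<Sum>i\<le>j. Am lam k i * Lop lam c i) = (if k = j then 1 else 0)" if "k \<le> j" for k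
  proof -
    have "(\<Sum>i\<le>j. Am lam k i * Lop lam c i) = (\<Sum>i\<le>Suc j. Am lam k i * Lop lam c i)"
      using L0 by simp
    also have "\<dots> = (\<Sum>i\<le>Suc j. Am lam (Suc k) i * c i)"
      by (rule rec_sum[OF lam c0, symmetric])
    also have "\<dots> = (if k = j then 1 else 0)" using c that by (simp add: sysA_def)
    finally show ?thesis .
  qed
  then show ?thesis using L0 by (simp add: sysA_def)
qed

lemma Lop_sysA0:
  assumes c: "sysA lam 0 c"
  shows "Lop lam c = (\<lambda>_. 0)"
  using c by (auto simp: sysA_def Lop_def)

lemma sysA_c0:
  assumes "sysA lam j c" shows "c 0 = (if j = 0 then 1 else 0)"
proof -
  have "(\<Sum>i\<le>j. Am lam 0 i * c i) = (\<Sum>i\<le>j. if i = 0 then c 0 else 0)"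
    by (rule sum.cong) (auto simp: Am_0)
  also have "\<dots> = c 0" by simp
  finally show ?thesis using assms unfolding sysA_def by (metis le0)
qed




lemma differentiable_prod':
  fixes f :: "'i \<Rightarrow> 'a::real_normed_vector \<Rightarrow> real"
  assumes "\<And>i. i \<in> I \<Longrightarrow> f i differentiable (at x)"
  shows "(\<lambda>x. \<Prod>i\<in>I. f i x) differentiable (at x)"
proof -
  obtain D where "\<And>i. i \<in> I \<Longrightarrow> (f i has_derivative D i) (at x)"
    using assms unfolding differentiable_def by metis
  then show ?thesis unfolding differentiable_def by (blast intro: has_derivative_prod)
qed

definition gs :: "(nat \<Rightarrow> real) \<Rightarrow> nat \<Rightarrow> real \<Rightarrow> real" where
  "gs c N s = (\<Sum>i\<le>N. c i * s ^ i)"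

definition Dc :: "(nat \<Rightarrow> real) \<Rightarrow> nat \<Rightarrow> real" where
  "Dc c m = c (Suc m) * real (Suc m)"

lemma Dc_zero: "\<forall>i>N. c i = 0 \<Longrightarrow> \<forall>i>N. Dc c i = 0"
  by (simp add: Dc_def)

lemma gs_deriv:
  assumes "\<forall>i>N. c i = 0"
  shows "(gs c N has_real_derivative gs (Dc c) N s) (at s)"
proof -
  have eq: "gs c N = (\<lambda>s. c 0 + (\<Sum>m\<le>N. c (Suc m) * s ^ Suc m))"
  proof
    fix s
    show "gs c N s = c 0 + (\<Sum>m\<le>N. c (Suc m) * s ^ Suc m)"
      unfolding gs_def by (subst sum_shift) (simp_all add: assms)
  qed
  have t: "((\<lambda>s. c (Suc m) * s ^ Suc m) has_real_derivative c (Suc m) * (real (Suc m) * s ^ m)) (at s)" for m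
    using DERIV_cmult[OF DERIV_pow[of "Suc m" s], of "c (Suc m)"] by simp
  have "((\<lambda>s. c 0 + (\<Sum>m\<le>N. c (Suc m) * s ^ Suc m)) has_real_derivative
          0 + (\<Sum>m\<le>N. c (Suc m) * (real (Suc m) * s ^ m))) (at s)"
    by (intro DERIV_add DERIV_const DERIV_sum t)
  then show ?thesis unfolding eq gs_def Dc_def by (simp add: algebra_simps)
qed

lemma gs_Lop:
  assumes c: "\<forall>i>N. c i = 0"
  shows "gs (Lop lam c) N s = 4*(1-s)*gs (Dc (Dc c)) N s - 4*lam*gs (Dc c) N s"
proof -
  have Dz: "\<forall>i>N. Dc c i = 0" using c by (simp add: Dc_def)
  have sh: "(\<Sum>m\<le>N. real m * Dc c m * s ^ m) = s * gs (Dc (Dc c)) N s"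
  proof -
    have "(\<Sum>m\<le>N. real m * Dc c m * s ^ m) = real 0 * Dc c 0 * s ^ 0 + (\<Sum>m\<le>N. real (Suc m) * Dc c (Suc m) * s ^ Suc m)"
      by (rule sum_shift) (simp add: Dz)
    also have "\<dots> = s * gs (Dc (Dc c)) N s"
      unfolding gs_def by (simp add: sum_distrib_left Dc_def algebra_simps)
    finally show ?thesis .
  qed
  have "gs (Lop lam c) N s = 4 * gs (Dc (Dc c)) N s - 4 * (\<Sum>m\<le>N. real m * Dc c m * s ^ m) - 4*lam*gs (Dc c) N s"
    unfolding gs_def Lop_def Dc_def
    by (simp add: sum_distrib_left sum_subtractf[symmetric] algebra_simps numeral_2_eq_2)
  then show ?thesis unfolding sh by (simp add: algebra_simps)
qed

lemma dd_prod:
  fixes u u1 u2 v v1 v2 :: "real \<Rightarrow> real"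
  assumes "\<And>t. (u has_real_derivative u1 t) (at t)" "\<And>t. (u1 has_real_derivative u2 t) (at t)"
          "\<And>t. (v has_real_derivative v1 t) (at t)" "\<And>t. (v1 has_real_derivative v2 t) (at t)"
  shows "deriv (deriv (\<lambda>t. u t * v t)) 0 = u2 0 * v 0 + 2 * u1 0 * v1 0 + u 0 * v2 0"
proof -
  have "deriv (\<lambda>t. u t * v t) = (\<lambda>t. u1 t * v t + u t * v1 t)"
    by (rule ext, rule DERIV_imp_deriv) (auto intro!: derivative_eq_intros assms)
  moreover have "((\<lambda>t. u1 t * v t + u t * v1 t) has_real_derivative
      (u2 0 * v 0 + u1 0 * v1 0 + (u1 0 * v1 0 + u 0 * v2 0))) (at 0)"
    by (auto intro!: derivative_eq_intros assms)
  ultimately show ?thesis by (simp add: DERIV_imp_deriv)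
qed

lemma dd_single:
  fixes v v1 v2 :: "real \<Rightarrow> real"
  assumes "\<And>t. (v has_real_derivative v1 t) (at t)" "\<And>t. (v1 has_real_derivative v2 t) (at t)"
  shows "deriv (deriv v) 0 = v2 0"
proof -
  have "deriv v = v1" by (rule ext, rule DERIV_imp_deriv) (rule assms)
  then show ?thesis using assms(2) by (simp add: DERIV_imp_deriv)
qed

locale hrep =
  fixes Y :: "'a::euclidean_space \<Rightarrow> real" and n :: nat and A :: "('a \<Rightarrow> nat) set" and cf :: "('a \<Rightarrow> nat) \<Rightarrow> real"
  assumes finA: "finite A" and degA: "\<forall>\<alpha>\<in>A. (\<Sum>b\<in>Basis. \<alpha> b) = n"
    and Yeq: "\<forall>x. Y x = (\<Sum>\<alpha>\<in>A. cf \<alpha> * (\<Prod>b\<in>Basis. (x \<bullet> b) ^ \<alpha> b))"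
begin

lemma Y_fun: "Y = (\<lambda>x. \<Sum>\<alpha>\<in>A. cf \<alpha> * (\<Prod>b\<in>Basis. (x \<bullet> b) ^ \<alpha> b))"
  using Yeq by auto

lemma Y_line: "\<exists>p. \<forall>t. Y (x + t *\<^sub>R b) = poly p t"
proof
  show "\<forall>t. Y (x + t *\<^sub>R b) = poly (\<Sum>\<alpha>\<in>A. smult (cf \<alpha>) (\<Prod>b'\<in>Basis. [:x \<bullet> b', b \<bullet> b':] ^ (\<alpha> b'))) t"
    by (simp add: Yeq poly_sum poly_prod poly_power inner_add_left algebra_simps)
qed

lemma Y_diff: "Y differentiable (at x)"
  unfolding Y_fun using finA
  by (auto intro!: differentiable_sum differentiable_mult differentiable_const differentiable_prod'
        differentiable_power differentiable_inner differentiable_ident)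

lemma Y_hom: "Y (s *\<^sub>R x) = s ^ n * Y x"
proof -
  have "(\<Prod>b\<in>Basis. ((s *\<^sub>R x) \<bullet> b) ^ \<alpha> b) = s ^ n * (\<Prod>b\<in>Basis. (x \<bullet> b) ^ \<alpha> b)" if "\<alpha> \<in> A" for \<alpha>
  proof -
    have "(\<Prod>b\<in>Basis. ((s *\<^sub>R x) \<bullet> b) ^ \<alpha> b) = (\<Prod>b\<in>Basis. s ^ \<alpha> b) * (\<Prod>b\<in>Basis. (x \<bullet> b) ^ \<alpha> b)"
      by (simp add: power_mult_distrib prod.distrib)
    also have "(\<Prod>b\<in>Basis. s ^ \<alpha> b) = s ^ n" using degA that by (simp add: power_sum[symmetric])
    finally show ?thesis .
  qed
  then show ?thesis by (simp add: Yeq sum_distrib_left algebra_simps)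
qed

lemma euler:
  assumes D: "(Y has_derivative D) (at x)"
  shows "D x = real n * Y x"
proof -
  have lin: "linear D" using has_derivative_linear[OF D] .
  have "((\<lambda>s::real. s *\<^sub>R x) has_derivative (\<lambda>h. h *\<^sub>R x)) (at 1)"
    by (auto intro!: derivative_eq_intros)
  moreover have "(Y has_derivative D) (at ((\<lambda>s::real. s *\<^sub>R x) 1))" using D by simp
  ultimately have "((\<lambda>s. Y (s *\<^sub>R x)) has_derivative (\<lambda>h. D (h *\<^sub>R x))) (at 1)"
    by (rule has_derivative_compose)
  moreover have "(\<lambda>h. D (h *\<^sub>R x)) = (*) (D x)"
    using lin by (auto simp: linear_cmul)
  ultimately have d1: "((\<lambda>s. Y (s *\<^sub>R x)) has_real_derivative D x) (at 1)"
    unfolding has_field_derivative_def by simp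
  have d2: "((\<lambda>s. Y (s *\<^sub>R x)) has_real_derivative real n * Y x) (at 1)"
    unfolding Y_hom by (auto intro!: derivative_eq_intros)
  show ?thesis using DERIV_unique[OF d1 d2] .
qed

lemma euler_sum:
  assumes D: "(Y has_derivative D) (at x)"
  shows "(\<Sum>b\<in>Basis. (x \<bullet> b) * D b) = real n * Y x"
proof -
  have lin: "linear D" using has_derivative_linear[OF D] .
  have "D x = D (\<Sum>b\<in>Basis. (x \<bullet> b) *\<^sub>R b)" by (simp add: euclidean_representation)
  also have "\<dots> = (\<Sum>b\<in>Basis. (x \<bullet> b) * D b)" using lin by (simp add: linear_sum linear_cmul)
  finally show ?thesis using euler[OF D] by simp
qed

lemma per_b:
  fixes G G1 G2 :: "real \<Rightarrow> real"
  assumes G: "\<And>s. (G has_real_derivative G1 s) (at s)" "\<And>s. (G1 has_real_derivative G2 s) (at s)"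
    and D: "(Y has_derivative D) (at x)" and b: "b \<in> Basis"
  shows "deriv (deriv (\<lambda>t. G (1 - (norm (x + t *\<^sub>R b))\<^sup>2) * Y (x + t *\<^sub>R b))) 0
     = (4*(x \<bullet> b)^2 * G2 (1 - (norm x)\<^sup>2) - 2 * G1 (1 - (norm x)\<^sup>2)) * Y x
       - 4 * (x \<bullet> b) * G1 (1 - (norm x)\<^sup>2) * D b
       + G (1 - (norm x)\<^sup>2) * deriv (deriv (\<lambda>t. Y (x + t *\<^sub>R b))) 0"
proof -
  obtain p where p: "\<And>t. Y (x + t *\<^sub>R b) = poly p t" using Y_line by blast
  have pf: "(\<lambda>t. Y (x + t *\<^sub>R b)) = poly p" using p by auto
  define s0 where "s0 = 1 - (norm x)\<^sup>2"
  define \<phi> where "\<phi> = (\<lambda>t::real. s0 - 2*t*(x \<bullet> b) - t^2)"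
  have nrm: "(norm (x + t *\<^sub>R b))\<^sup>2 = (norm x)\<^sup>2 + 2*t*(x \<bullet> b) + t^2" for t
    using b unfolding power2_norm_eq_inner
    by (simp add: inner_add_left inner_add_right inner_commute algebra_simps power2_eq_square)
  have ufun: "(\<lambda>t. G (1 - (norm (x + t *\<^sub>R b))\<^sup>2)) = (\<lambda>t. G (\<phi> t))"
    by (rule ext) (simp add: nrm \<phi>_def s0_def algebra_simps)
  have u1: "((\<lambda>t. G (\<phi> t)) has_real_derivative G1 (\<phi> t) * (-2*(x \<bullet> b) - 2*t)) (at t)" for t
    unfolding \<phi>_def by (rule DERIV_chain2[OF G(1)]) (auto intro!: derivative_eq_intros)
  have u2: "((\<lambda>t. G1 (\<phi> t) * (-2*(x \<bullet> b) - 2*t)) has_real_derivative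
       G2 (\<phi> t) * (-2*(x \<bullet> b) - 2*t) * (-2*(x \<bullet> b) - 2*t) + G1 (\<phi> t) * (-2)) (at t)" for t
  proof -
    have "((\<lambda>t. G1 (\<phi> t)) has_real_derivative G2 (\<phi> t) * (-2*(x \<bullet> b) - 2*t)) (at t)"
      unfolding \<phi>_def by (rule DERIV_chain2[OF G(2)]) (auto intro!: derivative_eq_intros)
    then show ?thesis by (auto intro!: derivative_eq_intros)
  qed
  have v: "(poly p has_real_derivative poly (pderiv p) t) (at t)"
          "(poly (pderiv p) has_real_derivative poly (pderiv (pderiv p)) t) (at t)" for t
    by (rule poly_DERIV)+
  have dd: "deriv (deriv (\<lambda>t. G (\<phi> t) * poly p t)) 0 =
     (G2 (\<phi> 0) * (-2*(x \<bullet> b) - 2*0) * (-2*(x \<bullet> b) - 2*0) + G1 (\<phi> 0) * (-2)) * poly p 0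
     + 2 * (G1 (\<phi> 0) * (-2*(x \<bullet> b) - 2*0)) * poly (pderiv p) 0 + G (\<phi> 0) * poly (pderiv (pderiv p)) 0"
    by (rule dd_prod[OF u1 u2 v])
  have ddY: "deriv (deriv (\<lambda>t. Y (x + t *\<^sub>R b))) 0 = poly (pderiv (pderiv p)) 0"
    unfolding pf by (rule dd_single[OF v])
  have Db: "D b = poly (pderiv p) 0"
  proof -
    have lin: "linear D" using has_derivative_linear[OF D] .
    have "((\<lambda>t::real. x + t *\<^sub>R b) has_derivative (\<lambda>h. h *\<^sub>R b)) (at 0)"
      by (auto intro!: derivative_eq_intros)
    moreover have "(Y has_derivative D) (at ((\<lambda>t::real. x + t *\<^sub>R b) 0))" using D by simp
    ultimately have "((\<lambda>t. Y (x + t *\<^sub>R b)) has_derivative (\<lambda>h. D (h *\<^sub>R b))) (at 0)"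
      by (rule has_derivative_compose)
    moreover have "(\<lambda>h. D (h *\<^sub>R b)) = (*) (D b)"
      using lin by (auto simp: linear_cmul)
    ultimately have "(poly p has_real_derivative D b) (at 0)"
      unfolding has_field_derivative_def pf by simp
    then show ?thesis using DERIV_unique v(1) by blast
  qed
  have Y0: "poly p 0 = Y x" using p[of 0] by simp
  have phi0: "\<phi> 0 = s0" by (simp add: \<phi>_def)
  have fe: "(\<lambda>t. G (1 - (norm (x + t *\<^sub>R b))\<^sup>2) * Y (x + t *\<^sub>R b)) = (\<lambda>t. G (\<phi> t) * poly p t)"
    by (rule ext) (simp add: nrm \<phi>_def s0_def p algebra_simps)
  show ?thesis
    apply (simp only: fe ddY Db)
    apply (simp only: dd Y0 phi0 s0_def[symmetric])
    apply (simp add: algebra_simps power2_eq_square)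
    done
qed

end




context hrep begin

lemma lap_G:
  fixes G G1 G2 :: "real \<Rightarrow> real"
  assumes G: "\<And>s. (G has_real_derivative G1 s) (at s)" "\<And>s. (G1 has_real_derivative G2 s) (at s)"
    and harm: "laplacian Y x = 0"
  shows "laplacian (\<lambda>z. G (1 - (norm z)\<^sup>2) * Y z) x =
     Y x * (4 * (norm x)\<^sup>2 * G2 (1 - (norm x)\<^sup>2) - (2 * real DIM('a) + 4 * real n) * G1 (1 - (norm x)\<^sup>2))"
proof -
  obtain D where D: "(Y has_derivative D) (at x)" using Y_diff unfolding differentiable_def by blast
  define s0 where "s0 = 1 - (norm x)\<^sup>2"
  have "laplacian (\<lambda>z. G (1 - (norm z)\<^sup>2) * Y z) x =
     (\<Sum>b\<in>Basis. (4*(x \<bullet> b)^2 * G2 s0 - 2 * G1 s0) * Y x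
       - 4 * (x \<bullet> b) * G1 s0 * D b + G s0 * deriv (deriv (\<lambda>t. Y (x + t *\<^sub>R b))) 0)"
    unfolding laplacian_def s0_def by (rule sum.cong) (auto intro: per_b[OF G D])
  also have "\<dots> = 4 * G2 s0 * Y x * (\<Sum>b\<in>Basis. (x \<bullet> b)^2) - 2 * G1 s0 * Y x * real DIM('a)
      - 4 * G1 s0 * (\<Sum>b\<in>Basis. (x \<bullet> b) * D b) + G s0 * laplacian Y x"
    unfolding laplacian_def
    by (simp add: sum.distrib sum_subtractf sum_distrib_left algebra_simps)
  also have "(\<Sum>b\<in>Basis. (x \<bullet> b)^2) = (norm x)\<^sup>2"
  proof -
    have "(\<Sum>b\<in>Basis. (x \<bullet> b)^2) = (\<Sum>b\<in>Basis. x \<bullet> b * (x \<bullet> b))" by (simp add: power2_eq_square)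
    also have "\<dots> = x \<bullet> x" by (rule euclidean_inner[symmetric])
    also have "\<dots> = (norm x)\<^sup>2" by (rule power2_norm_eq_inner[symmetric])
    finally show ?thesis .
  qed
  also have "(\<Sum>b\<in>Basis. (x \<bullet> b) * D b) = real n * Y x" by (rule euler_sum[OF D])
  finally show ?thesis using harm unfolding s0_def by (simp add: algebra_simps)
qed

end

lemma gs_extend:
  assumes "\<forall>i>N. c i = 0" "N \<le> M"
  shows "gs c M s = gs c N s"
  unfolding gs_def by (rule sum.mono_neutral_right) (use assms in auto)

lemma gs_0: "gs c N 0 = c 0"
proof -
  have "gs c N 0 = (\<Sum>i\<le>N. if i = 0 then c 0 else 0)"
    unfolding gs_def by (rule sum.cong) auto
  then show ?thesis by simp
qed

lemma gs_zero: "gs (\<lambda>_. 0) N s = 0"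
  by (simp add: gs_def)

lemma lap_zero: "laplacian (\<lambda>_. 0::real) x = 0"
  by (simp add: laplacian_def)

lemma Ynj_gs:
  fixes Y :: "'a::euclidean_space \<Rightarrow> real"
  shows "Ynj n j Y = (if j < 0 then (\<lambda>_. 0) else
      (\<lambda>z. gs (coef DIM('a) n (nat j)) (nat j) (1 - (norm z)\<^sup>2) * Y z))"
  unfolding Ynj_def gs_def by (auto simp: sum_distrib_right atLeast0AtMost intro!: ext)

lemma hrep_of:
  assumes "Y \<in> harmonic_hom n"
  obtains A cf where "hrep Y n A cf" and "\<forall>x. laplacian Y x = 0"
  using assms unfolding harmonic_hom_def homogeneous_poly_def hrep_def by blast

lemma lap_step:
  fixes Y :: "'a::euclidean_space \<Rightarrow> real"
  assumes Y: "Y \<in> harmonic_hom n"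
  shows "laplacian (Ynj n j Y) = Ynj n (j - 1) Y"
proof -
  obtain A cf where hr: "hrep Y n A cf" and harm: "\<forall>x. laplacian Y x = 0"
    using hrep_of[OF Y] by blast
  interpret hrep Y n A cf by (rule hr)
  define lam where "lam = real n + real DIM('a) / 2"
  have "real DIM('a) > 0" by simp
  then have lam: "lam > 0" unfolding lam_def by linarith
  show ?thesis
  proof (cases "j < 0")
    case True then show ?thesis by (simp add: Ynj_gs lap_zero fun_eq_iff)
  next
    case False
    define J where "J = nat j"
    define c where "c = coef DIM('a) n J"
    have sc: "sysA lam J c" unfolding c_def lam_def by (rule coef_sysA) simp
    have cz: "\<forall>i>J. c i = 0" using sc by (simp add: sysA_def)
    have lapl: "laplacian (\<lambda>z. gs c J (1 - (norm z)\<^sup>2) * Y z) x = gs (Lop lam c) J (1 - (norm x)\<^sup>2) * Y x" for x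
    proof -
      have "laplacian (\<lambda>z. gs c J (1 - (norm z)\<^sup>2) * Y z) x =
        Y x * (4 * (norm x)\<^sup>2 * gs (Dc (Dc c)) J (1 - (norm x)\<^sup>2) - (2 * real DIM('a) + 4 * real n) * gs (Dc c) J (1 - (norm x)\<^sup>2))"
        by (rule lap_G[OF gs_deriv[OF cz] gs_deriv[OF Dc_zero[OF cz]]]) (simp add: harm)
      also have "\<dots> = gs (Lop lam c) J (1 - (norm x)\<^sup>2) * Y x"
        unfolding gs_Lop[OF cz] lam_def by (simp add: algebra_simps)
      finally show ?thesis .
    qed
    have Yj: "Ynj n j Y = (\<lambda>z. gs c J (1 - (norm z)\<^sup>2) * Y z)"
      using False by (simp add: Ynj_gs c_def J_def)
    show ?thesis
    proof (cases J)
      case 0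
      have L0: "Lop lam c = (\<lambda>_. 0)" using sc 0 by (intro Lop_sysA0) simp
      have jn: "j - 1 < 0" using 0 False J_def by simp
      show ?thesis unfolding Yj by (simp only: lapl L0 gs_zero Ynj_gs jn if_True fun_eq_iff) simp
    next
      case (Suc J')
      have s1: "sysA lam J' (Lop lam c)" using Lop_sysA[OF lam] sc Suc by simp
      have s2: "sysA lam J' (coef DIM('a) n J')" unfolding lam_def by (rule coef_sysA) simp
      have eqc: "Lop lam c = coef DIM('a) n J'" using sysA_ex1[OF lam, of J'] s1 s2 by blast
      have cz': "\<forall>i>J'. coef DIM('a) n J' i = 0" using s2 by (simp add: sysA_def)
      have nj: "nat (j - 1) = J'" "\<not> j - 1 < 0" using Suc False J_def by auto
      have ge: "gs (coef DIM('a) n J') J = gs (coef DIM('a) n J') J'" for s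
        by (rule ext, rule gs_extend[OF cz']) (simp add: Suc)
      show ?thesis unfolding Yj
        by (simp only: fun_eq_iff lapl eqc ge Ynj_gs nj if_False J_def[symmetric]) simp
    qed
  qed
qed

theorem lemma3p6:
  fixes Y :: "'a::euclidean_space \<Rightarrow> real" and n s :: nat and j :: int
  assumes "Y \<in> harmonic_hom n"
  shows "(\<forall>x. norm x \<le> 1 \<longrightarrow> (laplacian ^^ s) (Ynj n j Y) x = Ynj n (j - int s) Y x)
       \<and> (\<forall>\<xi>. norm \<xi> = 1 \<longrightarrow> (laplacian ^^ s) (Ynj n j Y) \<xi> = (if int s = j then Y \<xi> else 0))"
proof -
  have it: "(laplacian ^^ s) (Ynj n j Y) = Ynj n (j - int s) Y" for s
  proof (induction s)
    case 0 then show ?case by simp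
  next
    case (Suc s)
    then show ?case by (simp add: lap_step[OF assms] algebra_simps)
  qed
  have bd: "Ynj n (j - int s) Y \<xi> = (if int s = j then Y \<xi> else 0)" if "norm \<xi> = 1" for \<xi>
  proof (cases "j - int s < 0")
    case True then show ?thesis by (simp add: Ynj_gs)
  next
    case False
    have sc: "sysA (real n + real DIM('a) / 2) (nat (j - int s)) (coef DIM('a) n (nat (j - int s)))"
      by (rule coef_sysA) simp
    show ?thesis using False that sysA_c0[OF sc] by (auto simp: Ynj_gs gs_0)
  qed
  show ?thesis using it bd by simp
qed


end
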